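(* Let $G$ be a graph, $r\ge1$, and let $H$ be a minor of $G$ with minor model $(H_1,\dots,H_n)$ such that each $H_i$, $i\in\{1,\dots,n\}$, has diameter at most $\lfloor\frac{r-1}{2}\rfloor$. Then $\mathrm{degeneracy}(H)+1\le\mathrm{wcol}_r(G)$.
   Context: All graphs are finite, undirected, without loops. A path has length equal to its number of vertices minus one. For a linear ordering $L$ of $V(G)$ and $v\in V(G)$, $\mathrm{Wreach}_r(G,L,v)$ is the set of vertices $u$ such that there is a path $P$ of length at most $r$ between $u$ and $v$ with $u\preceq_L w$ for all $w\in V(P)$; $\mathrm{wcol}_r(G,L)=\max_v|\mathrm{Wreach}_r(G,L,v)|$, and $\mathrm{wcol}_r(G)$ is the minimum of $\mathrm{wcol}_r(G,L)$ over all linear orderings $L$ of $V(G)$. A graph $H$ with $V(H)=\{v_1,\dots,v_n\}$ is a minor of $G$ with minor model $(H_1,\dots,H_n)$ if $H_1,\dots,H_n$ are pairwise vertex-disjoint connected subgraphs of $G$ such that whenever $\{v_i,v_j\}\in E(H)$ there are $u_i\in V(H_i)$, $u_j\in V(H_j)$ with $\{u_i,u_j\}\in E(G)$. The diameter of a connected graph is the maximum distance (within that graph) between two of its vertices. The degeneracy of $H$ is the least $d$ such that every nonempty subgraph of $H$ has a vertex of degree at most $d$. *)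

theory Defs
  imports Main
begin

definition graph :: "'a set \<Rightarrow> 'a set set \<Rightarrow> bool" where
  "graph V E \<longleftrightarrow> finite V \<and> (\<forall>e\<in>E. \<exists>u v. u \<noteq> v \<and> u \<in> V \<and> v \<in> V \<and> e = {u, v})"

text \<open>A path in (V,E): a nonempty list of distinct vertices of V, consecutive ones adjacent.
Its length is the number of vertices minus one.\<close>
definition is_path :: "'a set \<Rightarrow> 'a set set \<Rightarrow> 'a list \<Rightarrow> bool" where
  "is_path V E P \<longleftrightarrow> P \<noteq> [] \<and> distinct P \<and> set P \<subseteq> V \<and>
     (\<forall>i. Suc i < length P \<longrightarrow> {P ! i, P ! Suc i} \<in> E)"

definition path_between :: "'a set \<Rightarrow> 'a set set \<Rightarrow> 'a list \<Rightarrow> 'a \<Rightarrow> 'a \<Rightarrow> bool" where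
  "path_between V E P u v \<longleftrightarrow> is_path V E P \<and> hd P = u \<and> last P = v"

definition subgraph :: "'a set \<Rightarrow> 'a set set \<Rightarrow> 'a set \<Rightarrow> 'a set set \<Rightarrow> bool" where
  "subgraph V' E' V E \<longleftrightarrow> V' \<subseteq> V \<and> E' \<subseteq> E \<and> (\<forall>e\<in>E'. e \<subseteq> V')"

definition connected_graph :: "'a set \<Rightarrow> 'a set set \<Rightarrow> bool" where
  "connected_graph V E \<longleftrightarrow> V \<noteq> {} \<and> (\<forall>u\<in>V. \<forall>v\<in>V. \<exists>P. path_between V E P u v)"

definition diameter_le :: "'a set \<Rightarrow> 'a set set \<Rightarrow> nat \<Rightarrow> bool" where
  "diameter_le V E k \<longleftrightarrow> (\<forall>u\<in>V. \<forall>v\<in>V. \<exists>P. path_between V E P u v \<and> length P - 1 \<le> k)"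

text \<open>Linear orderings of V are represented by lists enumerating V without repetition;
u precedes-or-equals w iff index of u \<le> index of w.\<close>
definition linear_ordering :: "'a set \<Rightarrow> 'a list \<Rightarrow> bool" where
  "linear_ordering V L \<longleftrightarrow> distinct L \<and> set L = V"

definition ord_le :: "'a list \<Rightarrow> 'a \<Rightarrow> 'a \<Rightarrow> bool" where
  "ord_le L u w \<longleftrightarrow> (\<exists>i j. i \<le> j \<and> j < length L \<and> L ! i = u \<and> L ! j = w)"

definition Wreach :: "nat \<Rightarrow> 'a set \<Rightarrow> 'a set set \<Rightarrow> 'a list \<Rightarrow> 'a \<Rightarrow> 'a set" where
  "Wreach r V E L v = {u. \<exists>P. path_between V E P u v \<and> length P - 1 \<le> r \<and>
                             (\<forall>w\<in>set P. ord_le L u w)}"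

definition wcol_ord :: "nat \<Rightarrow> 'a set \<Rightarrow> 'a set set \<Rightarrow> 'a list \<Rightarrow> nat" where
  "wcol_ord r V E L = Max ((\<lambda>v. card (Wreach r V E L v)) ` V)"

definition wcol :: "nat \<Rightarrow> 'a set \<Rightarrow> 'a set set \<Rightarrow> nat" where
  "wcol r V E = Min {wcol_ord r V E L | L. linear_ordering V L}"

definition minor_model :: "'b set \<Rightarrow> 'b set set \<Rightarrow> 'a set \<Rightarrow> 'a set set
     \<Rightarrow> ('b \<Rightarrow> 'a set) \<Rightarrow> ('b \<Rightarrow> 'a set set) \<Rightarrow> bool" where
  "minor_model VH EH V E MV ME \<longleftrightarrow>
     (\<forall>x\<in>VH. subgraph (MV x) (ME x) V E \<and> connected_graph (MV x) (ME x)) \<and>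
     (\<forall>x\<in>VH. \<forall>y\<in>VH. x \<noteq> y \<longrightarrow> MV x \<inter> MV y = {}) \<and>
     (\<forall>x y. {x, y} \<in> EH \<longrightarrow> (\<exists>u\<in>MV x. \<exists>w\<in>MV y. {u, w} \<in> E))"

definition degree_in :: "'b set set \<Rightarrow> 'b \<Rightarrow> nat" where
  "degree_in F v = card {e\<in>F. v \<in> e}"

definition degenerate_le :: "'b set \<Rightarrow> 'b set set \<Rightarrow> nat \<Rightarrow> bool" where
  "degenerate_le V E d \<longleftrightarrow>
     (\<forall>S F. subgraph S F V E \<and> S \<noteq> {} \<longrightarrow> (\<exists>v\<in>S. degree_in F v \<le> d))"

definition degeneracy :: "'b set \<Rightarrow> 'b set set \<Rightarrow> nat" where
  "degeneracy V E = (LEAST d. degenerate_le V E d)"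

end

theory Submission
  imports Defs
begin

definition pos :: "'a list \<Rightarrow> 'a \<Rightarrow> nat" where
  "pos L x = (THE i. i < length L \<and> L ! i = x)"

lemma pos_props:
  assumes "distinct L" "x \<in> set L"
  shows "pos L x < length L \<and> L ! pos L x = x"
proof -
  have "\<exists>!i. i < length L \<and> L ! i = x" using distinct_Ex1[OF assms] .
  then show ?thesis unfolding pos_def by (rule theI')
qed

lemma pos_nth:
  assumes "distinct L" "i < length L"
  shows "pos L (L ! i) = i"
proof -
  have "pos L (L!i) < length L \<and> L ! pos L (L!i) = L!i"
    using pos_props[OF assms(1)] assms(2) by simp
  then show ?thesis using assms nth_eq_iff_index_eq by blast
qed

lemma ord_le_pos:
  assumes "distinct L" "u \<in> set L" "w \<in> set L" "pos L u \<le> pos L w"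
  shows "ord_le L u w"
  unfolding ord_le_def using pos_props[OF assms(1)] assms by blast

lemma is_path_mono:
  "is_path V' E' P \<Longrightarrow> V' \<subseteq> V \<Longrightarrow> E' \<subseteq> E \<Longrightarrow> is_path V E P"
  unfolding is_path_def by blast

lemma is_path_append:
  assumes "is_path V E P1" "is_path V E P2" "set P1 \<inter> set P2 = {}"
    "{last P1, hd P2} \<in> E"
  shows "is_path V E (P1 @ P2)"
  unfolding is_path_def
proof (intro conjI allI impI)
  show "P1 @ P2 \<noteq> []" using assms(1) by (simp add: is_path_def)
  show "distinct (P1 @ P2)" using assms by (simp add: is_path_def)
  show "set (P1 @ P2) \<subseteq> V" using assms by (auto simp add: is_path_def)
  fix i assume i: "Suc i < length (P1 @ P2)"
  have ne1: "P1 \<noteq> []" and ne2: "P2 \<noteq> []" using assms by (auto simp: is_path_def)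
  consider "Suc i < length P1" | "Suc i = length P1" | "Suc i > length P1" by linarith
  then show "{(P1 @ P2) ! i, (P1 @ P2) ! Suc i} \<in> E"
  proof cases
    case 1 then show ?thesis using assms(1) by (simp add: nth_append is_path_def)
  next
    case 2
    have "i = length P1 - 1" using 2 by simp
    then have "(P1 @ P2) ! i = last P1" using 2 ne1 by (simp add: nth_append last_conv_nth)
    moreover have "(P1 @ P2) ! Suc i = hd P2" using 2 ne2 by (simp add: nth_append hd_conv_nth)
    ultimately show ?thesis using assms(4) by simp
  next
    case 3
    then have "Suc (i - length P1) < length P2" using i by simp
    then have "{P2 ! (i - length P1), P2 ! Suc (i - length P1)} \<in> E"
      using assms(2) by (simp add: is_path_def)
    moreover have "Suc i - length P1 = Suc (i - length P1)" using 3 by simp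
    ultimately show ?thesis using 3 by (simp add: nth_append)
  qed
qed

lemma main_L:
  fixes V :: "'a set" and E :: "'a set set"
    and VH :: "'b set" and EH :: "'b set set"
    and MV :: "'b \<Rightarrow> 'a set" and ME :: "'b \<Rightarrow> 'a set set"
    and r :: nat
  assumes gV: "graph V E"
    and gH: "graph VH EH"
    and r1: "r \<ge> 1"
    and mm: "minor_model VH EH V E MV ME"
    and dia: "\<forall>x\<in>VH. diameter_le (MV x) (ME x) ((r - 1) div 2)"
    and L: "linear_ordering V L"
    and VE: "V \<noteq> {}"
  shows "degeneracy VH EH + 1 \<le> wcol_ord r V E L"
proof -
  define d where "d = (r - 1) div 2"
  have dr: "2 * d + 1 \<le> r" using r1 unfolding d_def by linarith
  have dL: "distinct L" and sL: "set L = V" using L by (auto simp: linear_ordering_def)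
  have finV: "finite V" using gV by (simp add: graph_def)
  have finVH: "finite VH" using gH by (simp add: graph_def)
  have sub: "MV x \<subseteq> V \<and> ME x \<subseteq> E \<and> MV x \<noteq> {}" if x: "x \<in> VH" for x
  proof -
    have "subgraph (MV x) (ME x) V E" "connected_graph (MV x) (ME x)"
      using mm x unfolding minor_model_def by auto
    then show ?thesis by (simp add: subgraph_def connected_graph_def)
  qed
  have disj: "MV x \<inter> MV y = {}" if "x \<in> VH" "y \<in> VH" "x \<noteq> y" for x y
    using mm that unfolding minor_model_def by simp
  define k where "k x = Min (pos L ` MV x)" for x
  define m where "m x = L ! k x" for x
  have km: "\<And>x. x \<in> VH \<Longrightarrow> m x \<in> MV x \<and> pos L (m x) = k x \<and> (\<forall>u\<in>MV x. k x \<le> pos L u)"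
  proof -
    fix x assume x: "x \<in> VH"
    have fin: "finite (MV x)" using sub[OF x] finV finite_subset by blast
    have "k x \<in> pos L ` MV x" unfolding k_def using fin sub[OF x] by (intro Min_in) auto
    then obtain u where u: "u \<in> MV x" "k x = pos L u" by auto
    have "u \<in> set L" using u sub[OF x] sL by auto
    then have "m x = u" using pos_props[OF dL] u unfolding m_def by simp
    moreover have "\<forall>u\<in>MV x. k x \<le> pos L u" unfolding k_def using fin by auto
    ultimately show "m x \<in> MV x \<and> pos L (m x) = k x \<and> (\<forall>u\<in>MV x. k x \<le> pos L u)"
      using u by simp
  qed
  have minj: "\<And>x y. x \<in> VH \<Longrightarrow> y \<in> VH \<Longrightarrow> m x = m y \<Longrightarrow> x = y"
  proof (rule ccontr)
    fix x y assume a: "x \<in> VH" "y \<in> VH" "m x = m y" "x \<noteq> y"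
    have "m x \<in> MV x" using km[OF a(1)] by blast
    moreover have "m x \<in> MV y" using km[OF a(2)] a(3) by simp
    ultimately show False using disj[OF a(1,2,4)] by blast
  qed
  have wfin: "\<And>v. finite (Wreach r V E L v)"
  proof -
    fix v
    have "Wreach r V E L v \<subseteq> V"
    proof
      fix u assume "u \<in> Wreach r V E L v"
      then obtain P where "path_between V E P u v" unfolding Wreach_def by blast
      then have "P \<noteq> []" "set P \<subseteq> V" "hd P = u"
        unfolding path_between_def is_path_def by auto
      then show "u \<in> V" using hd_in_set by blast
    qed
    then show "finite (Wreach r V E L v)" using finV finite_subset by blast
  qed
  define c where "c = wcol_ord r V E L"
  have cge: "\<And>v. v \<in> V \<Longrightarrow> card (Wreach r V E L v) \<le> c"
    unfolding c_def wcol_ord_def using finV by (intro Max_ge) auto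
  have self: "\<And>v. v \<in> V \<Longrightarrow> v \<in> Wreach r V E L v"
  proof -
    fix v assume v: "v \<in> V"
    have "path_between V E [v] v v" unfolding path_between_def is_path_def using v by simp
    moreover have "ord_le L v v" using ord_le_pos[OF dL] v sL by simp
    ultimately show "v \<in> Wreach r V E L v" unfolding Wreach_def by fastforce
  qed
  have keyA: "m y \<in> Wreach r V E L (m x)"
    if x: "x \<in> VH" and y: "y \<in> VH" and xy: "x \<noteq> y" and e: "{x,y} \<in> EH" and lt: "k y < k x"
    for x y
  proof -
    obtain u w where u: "u \<in> MV x" and w: "w \<in> MV y" and uw: "{u,w} \<in> E"
      using mm e unfolding minor_model_def by blast
    obtain P1 where P1: "path_between (MV x) (ME x) P1 u (m x)" "length P1 - 1 \<le> d"
      using dia x km[OF x] u unfolding diameter_le_def d_def by blast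
    obtain P2 where P2: "path_between (MV y) (ME y) P2 (m y) w" "length P2 - 1 \<le> d"
      using dia y km[OF y] w unfolding diameter_le_def d_def by blast
    have p1: "is_path V E P1" using P1(1) sub[OF x] is_path_mono unfolding path_between_def by blast
    have p2: "is_path V E P2" using P2(1) sub[OF y] is_path_mono unfolding path_between_def by blast
    have s1: "set P1 \<subseteq> MV x" and s2: "set P2 \<subseteq> MV y"
      using P1(1) P2(1) unfolding path_between_def is_path_def by auto
    have ne1: "P1 \<noteq> []" and ne2: "P2 \<noteq> []" using p1 p2 by (auto simp: is_path_def)
    have dj: "set P2 \<inter> set P1 = {}" using disj[OF x y xy] s1 s2 by blast
    have ed: "{last P2, hd P1} \<in> E" using uw P1(1) P2(1) unfolding path_between_def
      by (simp add: insert_commute)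
    have "is_path V E (P2 @ P1)" by (rule is_path_append[OF p2 p1 dj ed])
    moreover have "hd (P2 @ P1) = m y" "last (P2 @ P1) = m x"
      using P1(1) P2(1) ne1 ne2 unfolding path_between_def by auto
    moreover have "length (P2 @ P1) - 1 \<le> r" using P1(2) P2(2) ne1 ne2 dr by (cases P1; cases P2) auto
    moreover have "\<forall>z\<in>set (P2 @ P1). ord_le L (m y) z"
    proof
      fix z assume z: "z \<in> set (P2 @ P1)"
      have zV: "z \<in> set L" using z s1 s2 sub[OF x] sub[OF y] sL by auto
      have myV: "m y \<in> set L" using km[OF y] sub[OF y] sL by auto
      have "k y \<le> pos L z" 
      proof -
        have "z \<in> MV y \<or> z \<in> MV x" using z s1 s2 by auto
        moreover have "z \<in> MV y \<Longrightarrow> k y \<le> pos L z" using km[OF y] by blast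
        moreover have "z \<in> MV x \<Longrightarrow> k x \<le> pos L z" using km[OF x] by blast
        ultimately show ?thesis using lt by linarith
      qed
      then show "ord_le L (m y) z" using ord_le_pos[OF dL myV zV] km[OF y] by simp
    qed
    ultimately show ?thesis unfolding Wreach_def path_between_def by (intro CollectI exI[of _ "P2 @ P1"]) simp
  qed
  have c1: "c \<ge> 1"
  proof -
    obtain v where v: "v \<in> V" using VE by auto
    have "card (Wreach r V E L v) \<ge> 1" using self[OF v] wfin card_0_eq[OF wfin] by fastforce
    then show ?thesis using cge[OF v] by simp
  qed
  have deg: "degenerate_le VH EH (c - 1)"
    unfolding degenerate_le_def
  proof (intro allI impI)
    fix S F assume SF: "subgraph S F VH EH \<and> S \<noteq> {}"
    have finS: "finite S" using SF finVH finite_subset unfolding subgraph_def by blast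
    have "Max (k ` S) \<in> k ` S" using finS SF by (intro Max_in) auto
    then obtain v where v: "v \<in> S" "k v = Max (k ` S)" by auto
    have vH: "v \<in> VH" using v SF unfolding subgraph_def by blast
    define Y where "Y = {y \<in> S. y \<noteq> v \<and> {v,y} \<in> EH}"
    have finY: "finite Y" using finS unfolding Y_def by simp
    have "{e\<in>F. v \<in> e} \<subseteq> (\<lambda>z. {v,z}) ` Y"
    proof
      fix e assume e: "e \<in> {e\<in>F. v \<in> e}"
      have eH: "e \<in> EH" and eS: "e \<subseteq> S" using e SF unfolding subgraph_def by auto
      obtain a b where ab: "a \<noteq> b" "e = {a,b}" using gH eH unfolding graph_def by blast
      obtain z where "e = {v,z}" "z \<noteq> v" using ab e by auto
      then show "e \<in> (\<lambda>z. {v,z}) ` Y" unfolding Y_def using eS eH by auto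
    qed
    then have "degree_in F v \<le> card Y"
      unfolding degree_in_def using finY by (meson card_image_le card_mono finite_imageI le_trans)
    also have "card Y = card (m ` Y)"
    proof -
      have "inj_on m Y" 
      proof (rule inj_onI)
        fix a b assume ab: "a \<in> Y" "b \<in> Y" "m a = m b"
        have "S \<subseteq> VH" using SF unfolding subgraph_def by blast
        then have "a \<in> VH" "b \<in> VH" using ab(1,2) unfolding Y_def by auto
        then show "a = b" using minj ab(3) by blast
      qed
      then show ?thesis by (simp add: card_image)
    qed
    also have "card (m ` Y) \<le> card (Wreach r V E L (m v) - {m v})"
    proof (rule card_mono)
      show "finite (Wreach r V E L (m v) - {m v})" using wfin by simp
      show "m ` Y \<subseteq> Wreach r V E L (m v) - {m v}"
      proof
        fix z assume "z \<in> m ` Y"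
        then obtain y where y: "y \<in> Y" "z = m y" by auto
        have yH: "y \<in> VH" and yS: "y \<in> S" using y SF unfolding Y_def subgraph_def by auto
        have "k y \<le> k v" using v finS yS by simp
        moreover have "k y \<noteq> k v" 
        proof
          assume "k y = k v"
          then have "m y = m v" unfolding m_def by simp
          then have "y = v" using minj[OF yH vH] by blast
          then show False using y unfolding Y_def by blast
        qed
        ultimately have "k y < k v" by simp
        moreover have "{v,y} \<in> EH" "y \<noteq> v" using y unfolding Y_def by auto
        ultimately have "m y \<in> Wreach r V E L (m v)" using keyA[OF vH yH] by blast
        moreover have "m y \<noteq> m v" using minj[OF yH vH] \<open>y \<noteq> v\<close> by blast
        ultimately show "z \<in> Wreach r V E L (m v) - {m v}" using y by simp
      qed
    qed
    also have "\<dots> = card (Wreach r V E L (m v)) - 1"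
      using self km[OF vH] sub[OF vH] wfin by auto
    also have "\<dots> \<le> c - 1" using cge km[OF vH] sub[OF vH] by (meson diff_le_mono subsetD)
    finally show "\<exists>v\<in>S. degree_in F v \<le> c - 1" using v by blast
  qed
  then have "degeneracy VH EH \<le> c - 1" unfolding degeneracy_def by (rule Least_le)
  then show ?thesis using c1 unfolding c_def by simp
qed

theorem lemma10:
  fixes V :: "'a set" and E :: "'a set set"
    and VH :: "'b set" and EH :: "'b set set"
    and MV :: "'b \<Rightarrow> 'a set" and ME :: "'b \<Rightarrow> 'a set set"
    and r :: nat
  assumes "graph V E" and "V \<noteq> {}"
    and "graph VH EH"
    and "r \<ge> 1"
    and "minor_model VH EH V E MV ME"
    and "\<forall>x\<in>VH. diameter_le (MV x) (ME x) ((r - 1) div 2)"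
  shows "degeneracy VH EH + 1 \<le> wcol r V E"
proof -
  have finV: "finite V" using assms(1) by (simp add: graph_def)
  have "{L. linear_ordering V L} \<subseteq> {xs. set xs \<subseteq> V \<and> length xs \<le> card V}"
    unfolding linear_ordering_def using distinct_card by fastforce
  then have finL: "finite {L. linear_ordering V L}"
    using finite_lists_length_le[OF finV] finite_subset by blast
  have eq: "{wcol_ord r V E L | L. linear_ordering V L} = wcol_ord r V E ` {L. linear_ordering V L}"
    by auto
  obtain L0 where "linear_ordering V L0"
    using finite_distinct_list[OF finV] unfolding linear_ordering_def by blast
  then have "wcol r V E \<in> wcol_ord r V E ` {L. linear_ordering V L}"
    unfolding wcol_def eq using finL by (intro Min_in) auto
  then obtain L where "linear_ordering V L" "wcol r V E = wcol_ord r V E L" by auto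
  then show ?thesis using main_L[OF assms(1,3,4,5,6)] assms(2) by simp
qed

end
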